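(* $\mathfrak{mac}(\mathsf{null}\setminus\{\emptyset\},\subseteq)=\mathfrak{c}$.
   Context: $\mathsf{null}$ is the ideal of Lebesgue measure zero subsets of $2^\omega$, ordered by inclusion. For a poset $P$, an antichain is a set of pairwise incomparable elements and $\mathfrak{mac}(P)$ is the minimal cardinality of a maximal (under inclusion) antichain. $\mathfrak{c}=2^{\aleph_0}$. *)

theory Defs
  imports "HOL-Probability.Probability"
begin

text \<open>Cantor space 2^omega as nat => bool, with the Lebesgue (fair coin product) measure.\<close>
definition cantor_measure :: "(nat \<Rightarrow> bool) measure" where
  "cantor_measure = (\<Pi>\<^sub>M i\<in>(UNIV::nat set). measure_pmf (bernoulli_pmf (1/2)))"

text \<open>The ideal of Lebesgue null subsets (Lebesgue measure is complete, so these are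
  exactly the subsets of measurable sets of measure zero).\<close>
definition null_ideal :: "(nat \<Rightarrow> bool) set set" where
  "null_ideal = {A. \<exists>B\<in>sets cantor_measure. A \<subseteq> B \<and> emeasure cantor_measure B = 0}"

definition antichain_in :: "'a set set \<Rightarrow> 'a set set \<Rightarrow> bool" where
  "antichain_in P A \<longleftrightarrow> A \<subseteq> P \<and> (\<forall>x\<in>A. \<forall>y\<in>A. x \<noteq> y \<longrightarrow> \<not> x \<subseteq> y \<and> \<not> y \<subseteq> x)"

definition maximal_antichain_in :: "'a set set \<Rightarrow> 'a set set \<Rightarrow> bool" where
  "maximal_antichain_in P A \<longleftrightarrow> antichain_in P A \<and> (\<forall>B. antichain_in P B \<and> A \<subseteq> B \<longrightarrow> B = A)"

end

theory Submission imports Defs begin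
unbundle cardinal_syntax

abbreviation "BN \<equiv> (\<lambda>_::nat. measure_pmf (bernoulli_pmf (1/2)))"

interpretation P: product_prob_space BN UNIV
  by unfold_locales

lemma space_CM[simp]: "space cantor_measure = UNIV"
  unfolding cantor_measure_def by (simp add: space_PiM)

definition fl :: "(nat\<Rightarrow>bool) \<Rightarrow> (nat\<Rightarrow>bool) \<Rightarrow> (nat\<Rightarrow>bool)" where
  "fl t x = (\<lambda>i. x i \<noteq> t i)"

lemma fl_meas: "fl t \<in> cantor_measure \<rightarrow>\<^sub>M cantor_measure"
  unfolding cantor_measure_def fl_def
  by (rule measurable_PiM_single') (auto simp: space_PiM)

lemma bool_set: "(F::bool set) = {} \<or> F = {True} \<or> F = {False} \<or> F = UNIV"
proof -
  have "F \<in> Pow UNIV" by simp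
  also have "Pow (UNIV::bool set) = {{}, {True}, {False}, UNIV}"
    by (auto simp: UNIV_bool Pow_insert)  
  finally show ?thesis by simp
qed
lemma bern_flip: "emeasure (measure_pmf (bernoulli_pmf (1/2))) ((\<lambda>b. b \<noteq> c) -` F)
   = emeasure (measure_pmf (bernoulli_pmf (1/2))) F"
proof (cases c)
  case False then show ?thesis by simp
next
  case True
  have e: "emeasure (measure_pmf (bernoulli_pmf (1/2))) {True} = emeasure (measure_pmf (bernoulli_pmf (1/2))) {False}"
    by (simp add: emeasure_pmf_single)
  have v: "Not -` {True} = {False}" "Not -` {False} = {True}" by auto
  from bool_set[of F] show ?thesis
    by (elim disjE) (simp_all add: True e v)
qed

lemma bern_flip'[simp]: "emeasure (measure_pmf (bernoulli_pmf (1/2))) ((\<lambda>b. b = (\<not> c)) -` F)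
   = emeasure (measure_pmf (bernoulli_pmf (1/2))) F"
  using bern_flip[of c F] by (simp add: vimage_def)

lemma distr_fl: "distr cantor_measure cantor_measure (fl t) = cantor_measure"
  unfolding cantor_measure_def
proof (rule P.PiM_eq)
  fix J F assume J: "finite J" and F: "\<And>j. j\<in>J \<Longrightarrow> F j \<in> sets (BN j)"
  have pre: "fl t -` prod_emb UNIV BN J (PiE J F) \<inter> space (PiM UNIV BN)
     = prod_emb UNIV BN J (PiE J (\<lambda>j. (\<lambda>b. b \<noteq> t j) -` F j))"
    by (auto simp: prod_emb_def fl_def space_PiM PiE_def Pi_def restrict_def extensional_def)
  show "emeasure (distr (PiM UNIV BN) (PiM UNIV BN) (fl t)) (prod_emb UNIV BN J (PiE J F)) = (\<Prod>j\<in>J. emeasure (BN j) (F j))"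
    apply (subst emeasure_distr)
      apply (rule fl_meas[unfolded cantor_measure_def])
     apply (auto intro!: sets_PiM_I_finite simp: J)[1]
    apply (simp only: pre)
    apply (subst P.emeasure_PiM_emb)
    using J apply (auto simp: bern_flip)
    done
qed simp

lemma null_fl: assumes "B \<in> sets cantor_measure" "emeasure cantor_measure B = 0"
  shows "fl t -` B \<in> sets cantor_measure" "emeasure cantor_measure (fl t -` B) = 0"
proof -
  show "fl t -` B \<in> sets cantor_measure"
    using measurable_sets[OF fl_meas assms(1)] by simp
  have "emeasure cantor_measure (fl t -` B \<inter> space cantor_measure) = emeasure (distr cantor_measure cantor_measure (fl t)) B"
    by (rule emeasure_distr[symmetric, OF fl_meas assms(1)])
  then show "emeasure cantor_measure (fl t -` B) = 0" using assms distr_fl by simp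
qed


lemma prob_CM: "prob_space cantor_measure"
  unfolding cantor_measure_def by (rule prob_space_PiM) (rule prob_space_measure_pmf)

lemma sing_null: "{x} \<in> sets cantor_measure \<and> emeasure cantor_measure {x} = 0"
proof -
  define C where "C n = {y \<in> space (PiM UNIV BN). \<forall>i\<in>{..<n}. y i \<in> {x i}}" for n
  have Cs: "C n \<in> sets cantor_measure" for n
    unfolding C_def cantor_measure_def
    by (rule sets.sets_Collect_finite_All) (auto intro!: sets_Collect_single')
  have Cm: "emeasure cantor_measure (C n) = ennreal ((1/2)^n)" for n
    unfolding C_def cantor_measure_def
    apply (subst P.emeasure_PiM_Collect)
       apply (auto simp: emeasure_pmf_single)
    by (metis ennreal_half ennreal_power inverse_eq_divide
    inverse_nonnegative_iff_nonnegative zero_le_numeral)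
  have eq: "{x} = (\<Inter>n. C n)"
  proof
    show "{x} \<subseteq> (\<Inter>n. C n)" by (auto simp: C_def space_PiM)
    show "(\<Inter>n. C n) \<subseteq> {x}"
    proof
      fix y assume "y \<in> (\<Inter>n. C n)"
      then have "\<And>i. y \<in> C (Suc i)" by blast
      then have "\<And>i. y i = x i" by (auto simp: C_def)
      then show "y \<in> {x}" by auto
    qed
  qed
  have xs: "{x} \<in> sets cantor_measure" unfolding eq using Cs by auto
  have le: "emeasure cantor_measure {x} \<le> ennreal ((1/2)^n)" for n
  proof -
    have "{x} \<subseteq> C n" unfolding eq by auto
    then show ?thesis using Cm[of n] emeasure_mono[OF _ Cs] by metis
  qed
  have lim: "(\<lambda>n. ennreal ((1/2)^n)) \<longlonglongrightarrow> ennreal 0"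
    by (intro tendsto_ennrealI LIMSEQ_power_zero) auto
  have "emeasure cantor_measure {x} \<le> ennreal 0"
    by (rule tendsto_le[OF _ lim tendsto_const]) (use le in auto)
  then show ?thesis using xs by simp
qed

lemma big_compl:
  assumes B: "B \<in> sets cantor_measure" "emeasure cantor_measure B = 0"
  shows "|UNIV :: (nat\<Rightarrow>bool) set| \<le>o |UNIV - B|"
proof -
  interpret prob_space cantor_measure by (rule prob_CM)
  let ?K = "UNIV - B"
  have cover: "UNIV \<subseteq> (\<lambda>(a,b). fl a b) ` (?K \<times> ?K)"
  proof
    fix t :: "nat \<Rightarrow> bool"
    have u: "B \<union> fl t -` B \<in> sets cantor_measure" using null_fl[OF B] B by auto
    have "emeasure cantor_measure (B \<union> fl t -` B) \<le> emeasure cantor_measure B + emeasure cantor_measure (fl t -` B)"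
      by (rule emeasure_subadditive) (use null_fl[OF B] B in auto)
    then have "emeasure cantor_measure (B \<union> fl t -` B) = 0" using null_fl[OF B] B by simp
    then have "B \<union> fl t -` B \<noteq> UNIV" using emeasure_space_1 by auto
    then obtain x where x: "x \<notin> B" "fl t x \<notin> B" by auto
    have "t = fl x (fl t x)" by (auto simp: fl_def)
    then show "t \<in> (\<lambda>(a,b). fl a b) ` (?K \<times> ?K)" using x
      by (intro image_eqI[where x="(x, fl t x)"]) auto
  qed
  then have 1: "|UNIV :: (nat\<Rightarrow>bool) set| \<le>o |?K \<times> ?K|" by (rule surj_imp_ordLeq)
  have inf: "infinite ?K"
  proof
    assume "finite ?K"
    then have "finite ((\<lambda>(a,b). fl a b) ` (?K \<times> ?K))" by auto
    then have "finite (UNIV :: (nat\<Rightarrow>bool) set)" using cover finite_subset by blast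
    moreover have "inj (\<lambda>n::nat. \<lambda>i::nat. i = n)" by (auto simp: inj_def fun_eq_iff)
    then have "infinite (range (\<lambda>n::nat. \<lambda>i::nat. i = n))" by (rule range_inj_infinite)
    ultimately show False using finite_subset[OF subset_UNIV] by blast
  qed
  show ?thesis by (rule ordLeq_ordIso_trans[OF 1 card_of_Times_same_infinite[OF inf]])
qed


lemma sing_in: "{x} \<in> null_ideal"
  unfolding null_ideal_def using sing_null[of x] by blast

lemma null_ins: assumes "S \<in> null_ideal" shows "S \<union> {x} \<in> null_ideal"
proof -
  obtain B where B: "B \<in> sets cantor_measure" "S \<subseteq> B" "emeasure cantor_measure B = 0"
    using assms unfolding null_ideal_def by blast
  have u: "B \<union> {x} \<in> sets cantor_measure" using sets.Un[OF B(1) conjunct1[OF sing_null[of x]]] .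
  have "emeasure cantor_measure (B \<union> {x}) \<le> emeasure cantor_measure B + emeasure cantor_measure {x}"
    by (rule emeasure_subadditive) (use B sing_null[of x] in auto)
  then have "emeasure cantor_measure (B \<union> {x}) = 0" using B sing_null[of x] by simp
  then show ?thesis unfolding null_ideal_def using u B by blast
qed

lemma null_sub: "S \<in> null_ideal \<Longrightarrow> T \<subseteq> S \<Longrightarrow> T \<in> null_ideal"
  unfolding null_ideal_def by blast

lemma comparable:
  assumes "maximal_antichain_in P A" "S \<in> P"
  shows "\<exists>a\<in>A. a \<subseteq> S \<or> S \<subseteq> a"
proof (cases "S \<in> A")
  case True then show ?thesis by blast
next
  case False
  have AP: "A \<subseteq> P" and anti: "\<forall>x\<in>A. \<forall>y\<in>A. x \<noteq> y \<longrightarrow> \<not> x \<subseteq> y \<and> \<not> y \<subseteq> x"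
    using assms(1) unfolding maximal_antichain_in_def antichain_in_def by auto
  have "\<not> antichain_in P (insert S A)"
    using assms(1) False unfolding maximal_antichain_in_def by blast
  moreover have "insert S A \<subseteq> P" using AP assms(2) by blast
  ultimately obtain u v where uv: "u \<in> insert S A" "v \<in> insert S A" "u \<noteq> v" "u \<subseteq> v \<or> v \<subseteq> u"
    unfolding antichain_in_def by blast
  show ?thesis
  proof (cases "u = S")
    case True
    then have "v \<in> A" using uv by auto
    then show ?thesis using uv True by blast
  next
    case uS: False
    then have u: "u \<in> A" using uv by auto
    show ?thesis
    proof (cases "v = S")
      case True then show ?thesis using u uv by blast
    next
      case False
      then have "v \<in> A" using uv by auto
      then have "False" using anti u uv(3,4) by blast
      then show ?thesis ..
    qed
  qed
qed

lemma lower: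
  assumes M: "maximal_antichain_in (null_ideal - {{}}) A"
  shows "|UNIV::(nat\<Rightarrow>bool) set| \<le>o |A|"
proof (rule ccontr)
  assume nle: "\<not> |UNIV::(nat\<Rightarrow>bool) set| \<le>o |A|"
  then have less: "|A| <o |UNIV::(nat\<Rightarrow>bool) set|"
    using ordLess_or_ordLeq[of "|A|" "|UNIV::(nat\<Rightarrow>bool) set|"] by (auto simp: card_of_Well_order)
  have AP: "A \<subseteq> null_ideal - {{}}" and anti: "\<forall>x\<in>A. \<forall>y\<in>A. x \<noteq> y \<longrightarrow> \<not> x \<subseteq> y \<and> \<not> y \<subseteq> x"
    using M unfolding maximal_antichain_in_def antichain_in_def by auto
  have antiD: "u = v" if "u \<in> A" "v \<in> A" "u \<subseteq> v" for u v
    using anti that by blast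
  have small: "|a0| \<le>o |A|" if a0: "a0 \<in> A" for a0
  proof -
    obtain B0 where B0: "B0 \<in> sets cantor_measure" "a0 \<subseteq> B0" "emeasure cantor_measure B0 = 0"
      using AP a0 unfolding null_ideal_def by blast
    have ex: "\<exists>a\<in>A. a0 - {p} \<subseteq> a \<and> p \<notin> a" if p: "p \<in> a0" for p
    proof (rule ccontr)
      assume no: "\<not> (\<exists>a\<in>A. a0 - {p} \<subseteq> a \<and> p \<notin> a)"
      let ?K = "UNIV - B0"
      have lo: "\<exists>a\<in>A. x \<in> a \<and> a \<subseteq> (a0 - {p}) \<union> {x}" if x: "x \<in> ?K" for x
      proof -
        have "a0 \<in> null_ideal" using AP a0 by auto
        then have "a0 - {p} \<in> null_ideal" by (rule null_sub) blast
        then have "(a0 - {p}) \<union> {x} \<in> null_ideal" by (rule null_ins)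
        then have "(a0 - {p}) \<union> {x} \<in> null_ideal - {{}}" by auto
        then obtain a where a: "a \<in> A" "a \<subseteq> (a0-{p}) \<union> {x} \<or> (a0-{p}) \<union> {x} \<subseteq> a"
          using comparable[OF M] by blast
        have xa0: "x \<notin> a0" using x B0 by auto
        show ?thesis
        proof (cases "(a0-{p}) \<union> {x} \<subseteq> a")
          case True
          then have "p \<in> a" using no a by blast
          then have "a0 \<subseteq> a" using True by blast
          moreover have "a \<noteq> a0" using True xa0 by blast
          ultimately show ?thesis using antiD[OF a0 a(1)] by blast
        next
          case False
          then have sub: "a \<subseteq> (a0-{p}) \<union> {x}" using a by blast
          have "x \<in> a"
          proof (rule ccontr)
            assume "x \<notin> a"
            then have "a \<subseteq> a0" "a \<noteq> a0" using sub p by blast+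
            then show False using antiD[OF a(1) a0] by blast
          qed
          then show ?thesis using a sub by blast
        qed
      qed
      define g where "g x = (SOME a. a\<in>A \<and> x \<in> a \<and> a \<subseteq> (a0 - {p}) \<union> {x})" for x
      have g: "g x \<in> A \<and> x \<in> g x \<and> g x \<subseteq> (a0 - {p}) \<union> {x}" if "x \<in> ?K" for x
        unfolding g_def using someI_ex[OF lo[OF that, unfolded Bex_def]] by blast
      have "inj_on g ?K"
      proof (rule inj_onI)
        fix x y assume xy: "x \<in> ?K" "y \<in> ?K" "g x = g y"
        show "x = y"
        proof (rule ccontr)
          assume "x \<noteq> y"
          then have "y \<in> a0" using g[OF xy(1)] g[OF xy(2)] xy(3) by blast
          then show False using xy(2) B0 by blast
        qed
      qed
      moreover have "g ` ?K \<subseteq> A" using g by blast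
      ultimately have "|?K| \<le>o |A|" using card_of_ordLeq by blast
      then have "|UNIV::(nat\<Rightarrow>bool) set| \<le>o |A|"
        using big_compl[OF B0(1) B0(3)] ordLeq_transitive by blast
      then show False using nle by blast
    qed
    define f where "f p = (SOME a. a\<in>A \<and> a0 - {p} \<subseteq> a \<and> p \<notin> a)" for p
    have f: "f p \<in> A \<and> a0 - {p} \<subseteq> f p \<and> p \<notin> f p" if "p \<in> a0" for p
      unfolding f_def using someI_ex[OF ex[OF that, unfolded Bex_def]] by blast
    have "inj_on f a0"
    proof (rule inj_onI)
      fix p q assume pq: "p \<in> a0" "q \<in> a0" "f p = f q"
      show "p = q"
      proof (rule ccontr)
        assume "p \<noteq> q"
        then have "q \<in> f p" using f[OF pq(1)] pq(2) by blast
        then show False using f[OF pq(2)] pq(3) by simp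
      qed
    qed
    moreover have "f ` a0 \<subseteq> A" using f by blast
    ultimately show ?thesis using card_of_ordLeq by blast
  qed
  have cov: "UNIV \<subseteq> snd ` (Sigma A id)"
  proof
    fix x :: "nat \<Rightarrow> bool"
    have "{x} \<in> null_ideal - {{}}" using sing_in by auto
    then obtain a where a: "a \<in> A" "a \<subseteq> {x} \<or> {x} \<subseteq> a" using comparable[OF M] by blast
    have "a \<noteq> {}" using a AP by auto
    then have "x \<in> a" using a by blast
    then show "x \<in> snd ` (Sigma A id)" using a by (intro image_eqI[where x="(a,x)"]) auto
  qed
  have 1: "|UNIV::(nat\<Rightarrow>bool) set| \<le>o |Sigma A id|" using cov by (rule surj_imp_ordLeq)
  have 2: "|Sigma A id| \<le>o |A \<times> A|"
  proof -
    have "\<forall>i\<in>A. |i| \<le>o |A|" using small by blast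
    from card_of_Sigma_mono1[OF this] show ?thesis by (simp add: id_def)
  qed
  have 3: "|UNIV::(nat\<Rightarrow>bool) set| \<le>o |A \<times> A|" using 1 2 ordLeq_transitive by blast
  show False
  proof (cases "finite A")
    case True
    then have "finite (UNIV::(nat\<Rightarrow>bool) set)" using 3 card_of_ordLeq_finite by blast
    moreover have "inj (\<lambda>n::nat. \<lambda>i::nat. i = n)" by (auto simp: inj_def fun_eq_iff)
    then have "infinite (range (\<lambda>n::nat. \<lambda>i::nat. i = n))" by (rule range_inj_infinite)
    ultimately show False using finite_subset[OF subset_UNIV] by blast
  next
    case False
    then have "|UNIV::(nat\<Rightarrow>bool) set| \<le>o |A|"
      using 3 card_of_Times_same_infinite[OF False] ordLeq_ordIso_trans by blast
    then show False using nle by blast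
  qed
qed

theorem mainTheorem12:
  shows "(\<exists>A. maximal_antichain_in (null_ideal - {{}}) A
              \<and> (card_of A, card_of (UNIV :: (nat \<Rightarrow> bool) set)) \<in> ordIso)
       \<and> (\<forall>A. maximal_antichain_in (null_ideal - {{}}) A
              \<longrightarrow> (card_of (UNIV :: (nat \<Rightarrow> bool) set), card_of A) \<in> ordLeq)"
proof (intro conjI allI impI)
  let ?A = "range (\<lambda>x::nat\<Rightarrow>bool. {x})"
  have anti: "antichain_in (null_ideal - {{}}) ?A"
    unfolding antichain_in_def using sing_in by auto
  have "maximal_antichain_in (null_ideal - {{}}) ?A"
    unfolding maximal_antichain_in_def
  proof (intro conjI allI impI anti)
    fix B assume B: "antichain_in (null_ideal - {{}}) B \<and> ?A \<subseteq> B"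
    show "B = ?A"
    proof
      show "?A \<subseteq> B" using B by blast
      show "B \<subseteq> ?A"
      proof
        fix b assume b: "b \<in> B"
        have BP: "B \<subseteq> null_ideal - {{}}" and ac: "\<forall>u\<in>B. \<forall>v\<in>B. u \<noteq> v \<longrightarrow> \<not> u \<subseteq> v"
          using B unfolding antichain_in_def by blast+
        have "b \<noteq> {}" using BP b by blast
        then obtain x where x: "x \<in> b" by blast
        have "{x} \<in> B" using B by blast
        have "b = {x}"
        proof (rule ccontr)
          assume "b \<noteq> {x}"
          then have "\<not> {x} \<subseteq> b" using ac \<open>{x} \<in> B\<close> b by metis
          then show False using x by blast
        qed
        then show "b \<in> ?A" by blast
      qed
    qed
  qed
  moreover have "bij_betw (\<lambda>x::nat\<Rightarrow>bool. {x}) UNIV ?A" by (auto simp: bij_betw_def inj_def)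
  then have "|UNIV::(nat\<Rightarrow>bool) set| =o |?A|" using card_of_ordIso by blast
  then have "|?A| =o |UNIV::(nat\<Rightarrow>bool) set|" by (rule ordIso_symmetric)
  ultimately show "\<exists>A. maximal_antichain_in (null_ideal - {{}}) A
              \<and> (card_of A, card_of (UNIV :: (nat \<Rightarrow> bool) set)) \<in> ordIso"
    by blast
next
  fix A assume "maximal_antichain_in (null_ideal - {{}}) A"
  then show "(card_of (UNIV :: (nat \<Rightarrow> bool) set), card_of A) \<in> ordLeq" by (rule lower)
qed

end
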